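(* A class of finite graphs has bounded clique-width (i.e., there is a constant $c$ with $\mathrm{cw}(G)\le c$ for all $G$ in the class) if and only if it has bounded multi-clique-width.
   Context: A $k$-expression is built from: atoms $i(v)$ creating a vertex $v$ with label $i\in\{1,\dots,k\}$; $\eta_{i,j}$ ($i\neq j$) adding an edge between every vertex labeled $i$ and every vertex labeled $j$; $\rho_{i\to j}$ changing every label $i$ to $j$; and $\oplus$, disjoint union. The generated graph is obtained by deleting labels. The clique-width $\mathrm{cw}(G)$ is the smallest $k$ such that $G$ is generated by a $k$-expression. A multi-$k$-expression is built as follows, where each vertex carries a (possibly empty) set of labels from $\{1,\dots,k\}$: atoms $m\langle i_1,\dots,i_\ell\rangle$ (with $m$ a positive integer and $i_1<\dots<i_\ell\le k$, possibly $\ell=0$) create $m$ vertices, each with label set $\{i_1,\dots,i_\ell\}$; $\eta_{i,j}$ creates an edge between every vertex having label $i$ and every vertex having label $j$, allowed only when no vertex has both labels $i$ and $j$; $\rho_{i\to S}$ for $S\subseteq\{1,\dots,k\}$ replaces label $i$ by the set $S$ (a vertex with label set $S'\ni i$ gets $(S'\setminus\{i\})\cup S$); $\varepsilon_i$ deletes label $i$ from all vertices; $\oplus$ is disjoint union. The generated graph is obtained by deleting all labels. The multi-clique-width $\mathrm{mcw}(G)$ is the smallest $k$ such that $G$ is generated by a multi-$k$-expression. *)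

theory Defs
  imports Main
begin

type_synonym 'a graph = "'a set \<times> ('a \<times> 'a) set"

definition finite_graph :: "'a graph \<Rightarrow> bool" where
  "finite_graph G \<longleftrightarrow> finite (fst G) \<and> snd G \<subseteq> fst G \<times> fst G
     \<and> sym (snd G) \<and> irrefl (snd G)"

datatype 'a kexp =
    KAtom nat 'a
  | KEta nat nat "'a kexp"
  | KRho nat nat "'a kexp"
  | KUnion "'a kexp" "'a kexp"

inductive kgen :: "nat \<Rightarrow> 'a kexp \<Rightarrow> 'a set \<Rightarrow> ('a \<Rightarrow> nat) \<Rightarrow> ('a \<times> 'a) set \<Rightarrow> bool"
  for k :: nat where
  katom: "1 \<le> i \<Longrightarrow> i \<le> k \<Longrightarrow> kgen k (KAtom i v) {v} (\<lambda>_. i) {}"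
| keta: "kgen k e V L E \<Longrightarrow> 1 \<le> i \<Longrightarrow> i \<le> k \<Longrightarrow> 1 \<le> j \<Longrightarrow> j \<le> k \<Longrightarrow> i \<noteq> j \<Longrightarrow>
     kgen k (KEta i j e) V L
       (E \<union> {(u, w). u \<in> V \<and> w \<in> V \<and> ((L u = i \<and> L w = j) \<or> (L u = j \<and> L w = i))})"
| krho: "kgen k e V L E \<Longrightarrow> 1 \<le> i \<Longrightarrow> i \<le> k \<Longrightarrow> 1 \<le> j \<Longrightarrow> j \<le> k \<Longrightarrow>
     kgen k (KRho i j e) V (\<lambda>v. if L v = i then j else L v) E"
| kunion: "kgen k e1 V1 L1 E1 \<Longrightarrow> kgen k e2 V2 L2 E2 \<Longrightarrow> V1 \<inter> V2 = {} \<Longrightarrow>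
     kgen k (KUnion e1 e2) (V1 \<union> V2) (\<lambda>v. if v \<in> V1 then L1 v else L2 v) (E1 \<union> E2)"

text \<open>Clique-width. The empty graph (generated by no expression) gets clique-width 0.\<close>

definition cw :: "'a graph \<Rightarrow> nat" where
  "cw G = (LEAST k. fst G = {} \<or> (\<exists>e L. kgen k e (fst G) L (snd G)))"

datatype mexp =
    MAtom nat "nat set"
  | MEta nat nat mexp
  | MRho nat "nat set" mexp
  | MEps nat mexp
  | MUnion mexp mexp

text \<open>mgen k e V L E: the multi-k-expression e is valid and evaluates to a labelled
  graph isomorphic to (V, L, E); vertices created by atoms are anonymous, so an atom
  may create any m-element set of vertices.\<close>

inductive mgen :: "nat \<Rightarrow> mexp \<Rightarrow> 'a set \<Rightarrow> ('a \<Rightarrow> nat set) \<Rightarrow> ('a \<times> 'a) set \<Rightarrow> bool"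
  for k :: nat where
  matom: "1 \<le> m \<Longrightarrow> finite V \<Longrightarrow> card V = m \<Longrightarrow> S \<subseteq> {1..k} \<Longrightarrow>
     mgen k (MAtom m S) V (\<lambda>_. S) {}"
| meta: "mgen k e V L E \<Longrightarrow> 1 \<le> i \<Longrightarrow> i \<le> k \<Longrightarrow> 1 \<le> j \<Longrightarrow> j \<le> k \<Longrightarrow>
     (\<forall>v\<in>V. \<not> (i \<in> L v \<and> j \<in> L v)) \<Longrightarrow>
     mgen k (MEta i j e) V L
       (E \<union> {(u, w). u \<in> V \<and> w \<in> V \<and> ((i \<in> L u \<and> j \<in> L w) \<or> (j \<in> L u \<and> i \<in> L w))})"
| mrho: "mgen k e V L E \<Longrightarrow> 1 \<le> i \<Longrightarrow> i \<le> k \<Longrightarrow> S \<subseteq> {1..k} \<Longrightarrow>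
     mgen k (MRho i S e) V (\<lambda>v. if i \<in> L v then (L v - {i}) \<union> S else L v) E"
| meps: "mgen k e V L E \<Longrightarrow> 1 \<le> i \<Longrightarrow> i \<le> k \<Longrightarrow>
     mgen k (MEps i e) V (\<lambda>v. L v - {i}) E"
| munion: "mgen k e1 V1 L1 E1 \<Longrightarrow> mgen k e2 V2 L2 E2 \<Longrightarrow> V1 \<inter> V2 = {} \<Longrightarrow>
     mgen k (MUnion e1 e2) (V1 \<union> V2) (\<lambda>v. if v \<in> V1 then L1 v else L2 v) (E1 \<union> E2)"

text \<open>Multi-clique-width; the empty graph gets 0.\<close>

definition mcw :: "'a graph \<Rightarrow> nat" where
  "mcw G = (LEAST k. fst G = {} \<or> (\<exists>e L. mgen k e (fst G) L (snd G)))"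

end

theory Submission
  imports Defs
begin

fun etas :: "(nat\<times>nat) list \<Rightarrow> 'a kexp \<Rightarrow> 'a kexp" where
  "etas [] e = e"
| "etas ((a,b)#ps) e = KEta a b (etas ps e)"

lemma etas_gen:
  assumes "kgen k e V L E" "\<forall>(a,b)\<in>set ps. 1\<le>a \<and> a\<le>k \<and> 1\<le>b \<and> b\<le>k \<and> a\<noteq>b"
  shows "kgen k (etas ps e) V L (E \<union> {(u,w). u\<in>V \<and> w\<in>V \<and> (\<exists>(a,b)\<in>set ps. (L u = a \<and> L w = b) \<or> (L u = b \<and> L w = a))})"
  using assms(2)
proof (induction ps)
  case Nil
  then show ?case using assms(1) by simp
next
  case (Cons p ps)
  obtain a b where p: "p = (a,b)" by (cases p)
  have "kgen k (KEta a b (etas ps e)) V L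
     ((E \<union> {(u,w). u\<in>V \<and> w\<in>V \<and> (\<exists>(a,b)\<in>set ps. (L u = a \<and> L w = b) \<or> (L u = b \<and> L w = a))})
      \<union> {(u, w). u \<in> V \<and> w \<in> V \<and> ((L u = a \<and> L w = b) \<or> (L u = b \<and> L w = a))})"
    apply (rule keta)
    using Cons p by auto
  moreover have "((E \<union> {(u,w). u\<in>V \<and> w\<in>V \<and> (\<exists>(a,b)\<in>set ps. (L u = a \<and> L w = b) \<or> (L u = b \<and> L w = a))})
      \<union> {(u, w). u \<in> V \<and> w \<in> V \<and> ((L u = a \<and> L w = b) \<or> (L u = b \<and> L w = a))})
     = E \<union> {(u,w). u\<in>V \<and> w\<in>V \<and> (\<exists>(a,b)\<in>set (p#ps). (L u = a \<and> L w = b) \<or> (L u = b \<and> L w = a))}"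
    using p by auto
  ultimately show ?case using p by simp
qed

lemma kconst:
  assumes "finite V" "V \<noteq> {}" "1 \<le> i" "i \<le> k"
  shows "\<exists>e. kgen k e V (\<lambda>_. i) {}"
  using assms(1,2)
proof (induction V rule: finite_ne_induct)
  case (singleton x)
  show ?case using katom[OF assms(3,4), of x] by blast
next
  case (insert x F)
  then obtain e where e: "kgen k e F (\<lambda>_. i) {}" by blast
  have "kgen k (KUnion (KAtom i x) e) ({x} \<union> F) (\<lambda>v. if v \<in> {x} then i else i) ({} \<union> {})"
    by (rule kunion[OF katom[OF assms(3,4)] e]) (use insert in auto)
  then show ?case by auto
qed

fun r1 :: "nat \<Rightarrow> nat \<Rightarrow> 'a kexp \<Rightarrow> 'a kexp" where
  "r1 N 0 e = e"
| "r1 N (Suc n) e = KRho (Suc n) (Suc n + N) (r1 N n e)"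

fun r2 :: "(nat \<Rightarrow> nat) \<Rightarrow> nat \<Rightarrow> nat \<Rightarrow> 'a kexp \<Rightarrow> 'a kexp" where
  "r2 f N 0 e = e"
| "r2 f N (Suc n) e = KRho (Suc n + N) (f (Suc n)) (r2 f N n e)"

lemma r1_gen:
  assumes "kgen K e V L E" "\<forall>v\<in>V. 1 \<le> L v \<and> L v \<le> N" "2*N \<le> K"
  shows "n \<le> N \<Longrightarrow> \<exists>L'. kgen K (r1 N n e) V L' E \<and> (\<forall>v\<in>V. L' v = (if L v \<le> n then L v + N else L v))"
proof (induction n)
  case 0
  have "\<forall>v\<in>V. L v = (if L v \<le> 0 then L v + N else L v)" using assms(2) by auto
  then show ?case using assms(1) by auto
next
  case (Suc n)
  then obtain L' where L': "kgen K (r1 N n e) V L' E" "\<forall>v\<in>V. L' v = (if L v \<le> n then L v + N else L v)"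
    by auto
  have "kgen K (KRho (Suc n) (Suc n + N) (r1 N n e)) V (\<lambda>v. if L' v = Suc n then Suc n + N else L' v) E"
    by (rule krho[OF L'(1)]) (use Suc assms in auto)
  moreover have "\<forall>v\<in>V. (if L' v = Suc n then Suc n + N else L' v) = (if L v \<le> Suc n then L v + N else L v)"
    using L'(2) Suc assms(2) by auto
  ultimately show ?case by auto
qed

lemma r2_gen:
  assumes "kgen K e V L0 E" "\<forall>v\<in>V. 1 \<le> L v \<and> L v \<le> N \<and> L0 v = L v + N" "2*N \<le> K"
    "\<forall>a. 1 \<le> a \<and> a \<le> N \<longrightarrow> 1 \<le> f a \<and> f a \<le> N"
  shows "n \<le> N \<Longrightarrow> \<exists>L'. kgen K (r2 f N n e) V L' E \<and> (\<forall>v\<in>V. L' v = (if L v \<le> n then f (L v) else L v + N))"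
proof (induction n)
  case 0
  have "\<forall>v\<in>V. L0 v = (if L v \<le> 0 then f (L v) else L v + N)" using assms(2) by auto
  then show ?case using assms(1) by auto
next
  case (Suc n)
  then obtain L' where L': "kgen K (r2 f N n e) V L' E" "\<forall>v\<in>V. L' v = (if L v \<le> n then f (L v) else L v + N)"
    by auto
  have fb: "1 \<le> f (Suc n) \<and> f (Suc n) \<le> N" using assms(4) Suc by auto
  have "kgen K (KRho (Suc n + N) (f (Suc n)) (r2 f N n e)) V (\<lambda>v. if L' v = Suc n + N then f (Suc n) else L' v) E"
    by (rule krho[OF L'(1)]) (use Suc assms fb in auto)
  moreover have "\<forall>v\<in>V. (if L' v = Suc n + N then f (Suc n) else L' v) = (if L v \<le> Suc n then f (L v) else L v + N)"
  proof
    fix v assume v: "v \<in> V"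
    show "(if L' v = Suc n + N then f (Suc n) else L' v) = (if L v \<le> Suc n then f (L v) else L v + N)"
    proof (cases "L v \<le> n")
      case True
      then have "f (L v) \<le> N" using assms(2,4) v by auto
      then show ?thesis using L'(2) v True by auto
    next
      case False
      show ?thesis
      proof (cases "L v = Suc n")
        case True
        then show ?thesis using L'(2) v by auto
      next
        case F2: False
        then show ?thesis using L'(2) v False by auto
      qed
    qed
  qed
  ultimately show ?case by auto
qed

lemma relabel:
  assumes "kgen K e V L E" "\<forall>v\<in>V. 1 \<le> L v \<and> L v \<le> N" "2*N \<le> K"
    "\<forall>a. 1 \<le> a \<and> a \<le> N \<longrightarrow> 1 \<le> f a \<and> f a \<le> N"
  shows "\<exists>e' L'. kgen K e' V L' E \<and> (\<forall>v\<in>V. L' v = f (L v))"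
proof -
  obtain L0 where L0: "kgen K (r1 N N e) V L0 E" "\<forall>v\<in>V. L0 v = (if L v \<le> N then L v + N else L v)"
    using r1_gen[OF assms(1,2,3)] by blast
  have "\<forall>v\<in>V. 1 \<le> L v \<and> L v \<le> N \<and> L0 v = L v + N" using L0(2) assms(2) by auto
  from r2_gen[OF L0(1) this assms(3,4), of N] obtain L' where
    "kgen K (r2 f N N (r1 N N e)) V L' E" "\<forall>v\<in>V. L' v = (if L v \<le> N then f (L v) else L v + N)"
    by auto
  then show ?thesis using assms(2) by auto
qed


fun tr :: "'a kexp \<Rightarrow> mexp" where
  "tr (KAtom i v) = MAtom 1 {i}"
| "tr (KEta i j e) = MEta i j (tr e)"
| "tr (KRho i j e) = MRho i {j} (tr e)"
| "tr (KUnion e1 e2) = MUnion (tr e1) (tr e2)"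

lemma k2m:
  assumes "kgen k e V L E"
  shows "mgen k (tr e) V (\<lambda>v. {L v}) E"
  using assms
proof induction
  case (katom i v)
  have "mgen k (MAtom 1 {i}) {v} (\<lambda>_. {i}) {}"
    by (rule matom) (use katom in auto)
  then show ?case by simp
next
  case (keta e V L E i j)
  have "mgen k (MEta i j (tr e)) V (\<lambda>v. {L v})
       (E \<union> {(u, w). u \<in> V \<and> w \<in> V \<and> ((i \<in> {L u} \<and> j \<in> {L w}) \<or> (j \<in> {L u} \<and> i \<in> {L w}))})"
    by (rule meta) (use keta in auto)
  moreover have "{(u, w). u \<in> V \<and> w \<in> V \<and> ((i \<in> {L u} \<and> j \<in> {L w}) \<or> (j \<in> {L u} \<and> i \<in> {L w}))}
    = {(u, w). u \<in> V \<and> w \<in> V \<and> ((L u = i \<and> L w = j) \<or> (L u = j \<and> L w = i))}" by auto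
  ultimately show ?case by simp
next
  case (krho e V L E i j)
  have "mgen k (MRho i {j} (tr e)) V (\<lambda>v. if i \<in> {L v} then ({L v} - {i}) \<union> {j} else {L v}) E"
    by (rule mrho) (use krho in auto)
  moreover have "(\<lambda>v. if i \<in> {L v} then ({L v} - {i}) \<union> {j} else {L v}) = (\<lambda>v. {if L v = i then j else L v})"
    by (rule ext) auto
  ultimately show ?case by simp
next
  case (kunion e1 V1 L1 E1 e2 V2 L2 E2)
  have "mgen k (MUnion (tr e1) (tr e2)) (V1 \<union> V2) (\<lambda>v. if v \<in> V1 then {L1 v} else {L2 v}) (E1 \<union> E2)"
    by (rule munion) (use kunion in auto)
  moreover have "(\<lambda>v. if v \<in> V1 then {L1 v} else {L2 v}) = (\<lambda>v. {if v \<in> V1 then L1 v else L2 v})"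
    by (rule ext) auto
  ultimately show ?case by simp
qed

lemma mlabels:
  assumes "mgen k e V L E"
  shows "\<forall>v\<in>V. L v \<subseteq> {1..k}"
  using assms by induction auto


lemma m2k:
  assumes "mgen k e V L E" "bij_betw enc (Pow {1..k}) {1..2^k}"
  shows "\<exists>e' L'. kgen (2*2^k) e' V L' E \<and> (\<forall>v\<in>V. L' v = enc (L v))"
  using assms(1)
proof induction
  case (matom m V S)
  have "V \<noteq> {}" using matom by auto
  moreover have "enc S \<in> {1..2^k}" using bij_betw_apply[OF assms(2)] matom by auto
  ultimately obtain e' where "kgen (2*2^k) e' V (\<lambda>_. enc S) {}"
    using kconst[OF matom(2), of "enc S" "2*2^k"] by auto
  then show ?case by auto
next
  case (meta e V L E i j)
  define N :: nat where "N = 2^k"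
  define dec where "dec = inv_into (Pow {1..k}) enc"
  obtain e' L' where IH: "kgen (2*2^k) e' V L' E" "\<forall>v\<in>V. L' v = enc (L v)" using meta by auto
  have lab: "\<forall>v\<in>V. L v \<subseteq> {1..k}" using mlabels[OF meta(1)] .
  have encin: "\<And>X. X \<subseteq> {1..k} \<Longrightarrow> enc X \<in> {1..N}" using bij_betw_apply[OF assms(2)] N_def by auto
  have decenc: "\<And>X. X \<subseteq> {1..k} \<Longrightarrow> dec (enc X) = X"
    unfolding dec_def using bij_betw_inv_into_left[OF assms(2)] by auto
  have encinj: "\<And>X Y. X \<subseteq> {1..k} \<Longrightarrow> Y \<subseteq> {1..k} \<Longrightarrow> enc X = enc Y \<Longrightarrow> X = Y"
    using decenc by metis
  define P where "P = {(a,b). a\<in>{1..N} \<and> b\<in>{1..N} \<and> a\<noteq>b \<and> i \<in> dec a \<and> j \<in> dec b}"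
  have "finite P" unfolding P_def
    by (rule finite_subset[of _ "{1..N} \<times> {1..N}"]) auto
  then obtain ps where ps: "set ps = P" using finite_list by blast
  have "\<forall>(a,b)\<in>set ps. 1\<le>a \<and> a\<le>2*2^k \<and> 1\<le>b \<and> b\<le>2*2^k \<and> a\<noteq>b"
    unfolding ps P_def N_def by auto
  from etas_gen[OF IH(1) this] have G:
    "kgen (2*2^k) (etas ps e') V L' (E \<union> {(u,w). u\<in>V \<and> w\<in>V \<and> (\<exists>(a,b)\<in>set ps. (L' u = a \<and> L' w = b) \<or> (L' u = b \<and> L' w = a))})" .
  have eq: "{(u,w). u\<in>V \<and> w\<in>V \<and> (\<exists>(a,b)\<in>set ps. (L' u = a \<and> L' w = b) \<or> (L' u = b \<and> L' w = a))}
     = {(u, w). u \<in> V \<and> w \<in> V \<and> ((i \<in> L u \<and> j \<in> L w) \<or> (j \<in> L u \<and> i \<in> L w))}"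
  proof (intro set_eqI iffI)
    fix x assume "x \<in> {(u,w). u\<in>V \<and> w\<in>V \<and> (\<exists>(a,b)\<in>set ps. (L' u = a \<and> L' w = b) \<or> (L' u = b \<and> L' w = a))}"
    then obtain u w a b where x: "x = (u,w)" "u\<in>V" "w\<in>V" "(a,b)\<in>P"
      "(L' u = a \<and> L' w = b) \<or> (L' u = b \<and> L' w = a)" unfolding ps by auto
    have "L' u = enc (L u)" "L' w = enc (L w)" using IH(2) x by auto
    moreover have "dec (enc (L u)) = L u" "dec (enc (L w)) = L w" using decenc lab x by auto
    ultimately show "x \<in> {(u, w). u \<in> V \<and> w \<in> V \<and> ((i \<in> L u \<and> j \<in> L w) \<or> (j \<in> L u \<and> i \<in> L w))}"
      using x unfolding P_def by auto
  next
    fix x assume "x \<in> {(u, w). u \<in> V \<and> w \<in> V \<and> ((i \<in> L u \<and> j \<in> L w) \<or> (j \<in> L u \<and> i \<in> L w))}"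
    then obtain u w where x: "x = (u,w)" "u\<in>V" "w\<in>V" "(i \<in> L u \<and> j \<in> L w) \<or> (j \<in> L u \<and> i \<in> L w)" by auto
    have L': "L' u = enc (L u)" "L' w = enc (L w)" using IH(2) x by auto
    have de: "dec (enc (L u)) = L u" "dec (enc (L w)) = L w" using decenc lab x by auto
    have ein: "enc (L u) \<in> {1..N}" "enc (L w) \<in> {1..N}" using encin lab x by auto
    have ne: "enc (L u) \<noteq> enc (L w)"
    proof
      assume "enc (L u) = enc (L w)"
      then have "L u = L w" using encinj lab x by auto
      then show False using meta(6) x by auto
    qed
    show "x \<in> {(u,w). u\<in>V \<and> w\<in>V \<and> (\<exists>(a,b)\<in>set ps. (L' u = a \<and> L' w = b) \<or> (L' u = b \<and> L' w = a))}"
    proof (cases "i \<in> L u \<and> j \<in> L w")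
      case True
      then have "(enc (L u), enc (L w)) \<in> set ps" unfolding ps P_def using de ein ne by auto
      then show ?thesis using x L' by auto
    next
      case False
      then have "j \<in> L u \<and> i \<in> L w" using x by auto
      then have "(enc (L w), enc (L u)) \<in> set ps" unfolding ps P_def using de ein ne by auto
      then show ?thesis using x L' by auto
    qed
  qed
  show ?case using G IH(2) unfolding eq by auto
next
  case (mrho e V L E i S)
  define N :: nat where "N = 2^k"
  define dec where "dec = inv_into (Pow {1..k}) enc"
  obtain e' L' where IH: "kgen (2*2^k) e' V L' E" "\<forall>v\<in>V. L' v = enc (L v)" using mrho by auto
  have lab: "\<forall>v\<in>V. L v \<subseteq> {1..k}" using mlabels[OF mrho(1)] .
  have encin: "\<And>X. X \<subseteq> {1..k} \<Longrightarrow> enc X \<in> {1..N}" using bij_betw_apply[OF assms(2)] N_def by auto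
  have decenc: "\<And>X. X \<subseteq> {1..k} \<Longrightarrow> dec (enc X) = X"
    unfolding dec_def using bij_betw_inv_into_left[OF assms(2)] by auto
  have decin: "\<And>a. a \<in> {1..N} \<Longrightarrow> dec a \<subseteq> {1..k}"
    unfolding dec_def N_def using bij_betw_apply[OF bij_betw_inv_into[OF assms(2)]] by auto
  define g where "g X = (if i \<in> X then (X - {i}) \<union> S else X)" for X
  define f where "f a = enc (g (dec a))" for a
  have "\<forall>a. 1 \<le> a \<and> a \<le> N \<longrightarrow> 1 \<le> f a \<and> f a \<le> N"
  proof (intro allI impI)
    fix a assume "1 \<le> a \<and> a \<le> N"
    then have "dec a \<subseteq> {1..k}" using decin by auto
    then have "g (dec a) \<subseteq> {1..k}" using mrho(4) unfolding g_def by auto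
    then show "1 \<le> f a \<and> f a \<le> N" using encin unfolding f_def by auto
  qed
  moreover have "\<forall>v\<in>V. 1 \<le> L' v \<and> L' v \<le> N" using IH(2) encin lab by fastforce
  ultimately obtain e2 L2 where R: "kgen (2*2^k) e2 V L2 E" "\<forall>v\<in>V. L2 v = f (L' v)"
    using relabel[OF IH(1), of N f] N_def by auto
  have "\<forall>v\<in>V. L2 v = enc (if i \<in> L v then (L v - {i}) \<union> S else L v)"
    using R(2) IH(2) decenc lab unfolding f_def g_def by auto
  then show ?case using R(1) by blast
next
  case (meps e V L E i)
  define N :: nat where "N = 2^k"
  define dec where "dec = inv_into (Pow {1..k}) enc"
  obtain e' L' where IH: "kgen (2*2^k) e' V L' E" "\<forall>v\<in>V. L' v = enc (L v)" using meps by auto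
  have lab: "\<forall>v\<in>V. L v \<subseteq> {1..k}" using mlabels[OF meps(1)] .
  have encin: "\<And>X. X \<subseteq> {1..k} \<Longrightarrow> enc X \<in> {1..N}" using bij_betw_apply[OF assms(2)] N_def by auto
  have decenc: "\<And>X. X \<subseteq> {1..k} \<Longrightarrow> dec (enc X) = X"
    unfolding dec_def using bij_betw_inv_into_left[OF assms(2)] by auto
  have decin: "\<And>a. a \<in> {1..N} \<Longrightarrow> dec a \<subseteq> {1..k}"
    unfolding dec_def N_def using bij_betw_apply[OF bij_betw_inv_into[OF assms(2)]] by auto
  define f where "f a = enc (dec a - {i})" for a
  have "\<forall>a. 1 \<le> a \<and> a \<le> N \<longrightarrow> 1 \<le> f a \<and> f a \<le> N"
  proof (intro allI impI)
    fix a assume "1 \<le> a \<and> a \<le> N"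
    then have "dec a \<subseteq> {1..k}" using decin by auto
    then have "dec a - {i} \<subseteq> {1..k}" by auto
    then show "1 \<le> f a \<and> f a \<le> N" using encin unfolding f_def by auto
  qed
  moreover have "\<forall>v\<in>V. 1 \<le> L' v \<and> L' v \<le> N" using IH(2) encin lab by fastforce
  ultimately obtain e2 L2 where R: "kgen (2*2^k) e2 V L2 E" "\<forall>v\<in>V. L2 v = f (L' v)"
    using relabel[OF IH(1), of N f] N_def by auto
  have "\<forall>v\<in>V. L2 v = enc (L v - {i})"
    using R(2) IH(2) decenc lab unfolding f_def by auto
  then show ?case using R(1) by auto
next
  case (munion e1 V1 L1 E1 e2 V2 L2 E2)
  obtain a1 M1 where A: "kgen (2*2^k) a1 V1 M1 E1" "\<forall>v\<in>V1. M1 v = enc (L1 v)" using munion by auto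
  obtain a2 M2 where B: "kgen (2*2^k) a2 V2 M2 E2" "\<forall>v\<in>V2. M2 v = enc (L2 v)" using munion by auto
  have "kgen (2*2^k) (KUnion a1 a2) (V1 \<union> V2) (\<lambda>v. if v \<in> V1 then M1 v else M2 v) (E1 \<union> E2)"
    by (rule kunion[OF A(1) B(1)]) (use munion in auto)
  moreover have "\<forall>v\<in>V1 \<union> V2. (if v \<in> V1 then M1 v else M2 v) = enc (if v \<in> V1 then L1 v else L2 v)"
    using A(2) B(2) by auto
  ultimately show ?case by blast
qed


lemma kmono:
  assumes "kgen k e V L E" "k \<le> k'"
  shows "kgen k' e V L E"
  using assms(1)
proof induction
  case (katom i v) then show ?case using assms(2) by (intro kgen.katom) auto
next
  case (keta e V L E i j) then show ?case using assms(2) by (intro kgen.keta) auto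
next
  case (krho e V L E i j) then show ?case using assms(2) by (intro kgen.krho) auto
next
  case (kunion e1 V1 L1 E1 e2 V2 L2 E2) then show ?case by (intro kgen.kunion) auto
qed

lemma kexist:
  assumes "finite V" "V \<noteq> {}"
  shows "\<forall>E. E \<subseteq> V\<times>V \<and> sym E \<and> irrefl E \<longrightarrow>
    (\<exists>e L. kgen (card V) e V L E \<and> inj_on L V \<and> (\<forall>v\<in>V. 1 \<le> L v \<and> L v \<le> card V))"
  using assms
proof (induction V rule: finite_ne_induct)
  case (singleton x)
  show ?case
  proof (intro allI impI)
    fix E assume E: "E \<subseteq> {x}\<times>{x} \<and> sym E \<and> irrefl E"
    then have "E = {}" by (auto simp: irrefl_def)
    then show "\<exists>e L. kgen (card {x}) e {x} L E \<and> inj_on L {x} \<and> (\<forall>v\<in>{x}. 1 \<le> L v \<and> L v \<le> card {x})"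
      using katom[of 1 "card {x}" x] by auto
  qed
next
  case (insert x F)
  define n where "n = card F"
  have cI: "card (insert x F) = Suc n" using insert n_def by auto
  show ?case
  proof (intro allI impI)
    fix E assume E: "E \<subseteq> insert x F \<times> insert x F \<and> sym E \<and> irrefl E"
    define EF where "EF = E \<inter> (F \<times> F)"
    have "EF \<subseteq> F\<times>F \<and> sym EF \<and> irrefl EF" using E unfolding EF_def sym_def irrefl_def by auto
    then obtain e L where eL: "kgen n e F L EF" "inj_on L F" "\<forall>v\<in>F. 1 \<le> L v \<and> L v \<le> n"
      using insert.IH n_def by blast
    have e1: "kgen (Suc n) e F L EF" using kmono[OF eL(1)] by auto
    define L1 where "L1 = (\<lambda>v. if v \<in> F then L v else Suc n)"
    have U: "kgen (Suc n) (KUnion e (KAtom (Suc n) x)) (F \<union> {x}) L1 (EF \<union> {})"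
      unfolding L1_def by (rule kunion[OF e1 katom]) (use insert in auto)
    define Nx where "Nx = {y\<in>F. (x,y)\<in>E}"
    have "finite Nx" unfolding Nx_def using insert by auto
    then obtain ys where ys: "set ys = Nx" using finite_list by blast
    define ps where "ps = map (\<lambda>y. (Suc n, L y)) ys"
    have "\<forall>(a,b)\<in>set ps. 1\<le>a \<and> a\<le>Suc n \<and> 1\<le>b \<and> b\<le>Suc n \<and> a\<noteq>b"
      unfolding ps_def using ys Nx_def eL(3) by auto
    from etas_gen[OF U this] have G: "kgen (Suc n) (etas ps (KUnion e (KAtom (Suc n) x))) (F \<union> {x}) L1
      (EF \<union> {} \<union> {(u,w). u\<in>F \<union> {x} \<and> w\<in>F \<union> {x} \<and> (\<exists>(a,b)\<in>set ps. (L1 u = a \<and> L1 w = b) \<or> (L1 u = b \<and> L1 w = a))})" .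
    have Lx: "\<forall>v\<in>insert x F. L1 v = Suc n \<longleftrightarrow> v = x" unfolding L1_def using eL(3) insert by auto
    have eq: "EF \<union> {} \<union> {(u,w). u\<in>F \<union> {x} \<and> w\<in>F \<union> {x} \<and> (\<exists>(a,b)\<in>set ps. (L1 u = a \<and> L1 w = b) \<or> (L1 u = b \<and> L1 w = a))} = E"
    proof (intro set_eqI iffI)
      fix p assume p: "p \<in> EF \<union> {} \<union> {(u,w). u\<in>F \<union> {x} \<and> w\<in>F \<union> {x} \<and> (\<exists>(a,b)\<in>set ps. (L1 u = a \<and> L1 w = b) \<or> (L1 u = b \<and> L1 w = a))}"
      show "p \<in> E"
      proof (cases "p \<in> EF")
        case True then show ?thesis unfolding EF_def by auto
      next
        case False
        then obtain u w y where uw: "p = (u,w)" "u \<in> insert x F" "w \<in> insert x F" "y \<in> Nx"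
          "(L1 u = Suc n \<and> L1 w = L y) \<or> (L1 u = L y \<and> L1 w = Suc n)"
          using p unfolding ps_def ys[symmetric] by auto
        have yF: "y \<in> F" "(x,y) \<in> E" using uw(4) unfolding Nx_def by auto
        have Ly: "L y \<noteq> Suc n" using eL(3) yF by auto
        show ?thesis
        proof (cases "L1 u = Suc n \<and> L1 w = L y")
          case True
          then have "u = x" using Lx uw by auto
          moreover have "w \<in> F" using True Ly uw(3) Lx by auto
          moreover then have "w = y" using True eL(2) yF unfolding L1_def inj_on_def by auto
          ultimately show ?thesis using uw yF by auto
        next
          case False
          then have T: "L1 u = L y \<and> L1 w = Suc n" using uw by auto
          then have "w = x" using Lx uw by auto
          moreover have "u \<in> F" using T Ly uw(2) Lx by auto
          moreover then have "u = y" using T eL(2) yF unfolding L1_def inj_on_def by auto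
          ultimately show ?thesis using uw yF E unfolding sym_def by auto
        qed
      qed
    next
      fix p assume p: "p \<in> E"
      then obtain u w where uw: "p = (u,w)" "u \<in> insert x F" "w \<in> insert x F" using E by auto
      have nuw: "u \<noteq> w" using E p uw unfolding irrefl_def by auto
      show "p \<in> EF \<union> {} \<union> {(u,w). u\<in>F \<union> {x} \<and> w\<in>F \<union> {x} \<and> (\<exists>(a,b)\<in>set ps. (L1 u = a \<and> L1 w = b) \<or> (L1 u = b \<and> L1 w = a))}"
      proof (cases "u \<in> F \<and> w \<in> F")
        case True then show ?thesis using p uw unfolding EF_def by auto
      next
        case False
        show ?thesis
        proof (cases "u = x")
          case True
          then have wF: "w \<in> F" using nuw uw by auto
          then have "w \<in> Nx" using p uw True unfolding Nx_def by auto
          then have "(Suc n, L w) \<in> set ps" unfolding ps_def ys[symmetric] by auto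
          moreover have "L1 u = Suc n" "L1 w = L w" using True wF insert(3) unfolding L1_def by auto
          ultimately show ?thesis using uw by blast
        next
          case False
          then have uF: "u \<in> F" and wx: "w = x" using \<open>\<not> (u \<in> F \<and> w \<in> F)\<close> uw by auto
          then have "(x,u) \<in> E" using p uw E unfolding sym_def by auto
          then have "u \<in> Nx" using uF unfolding Nx_def by auto
          then have "(Suc n, L u) \<in> set ps" unfolding ps_def ys[symmetric] by auto
          moreover have "L1 w = Suc n" "L1 u = L u" using wx uF insert(3) unfolding L1_def by auto
          ultimately show ?thesis using uw by blast
        qed
      qed
    qed
    have "F \<union> {x} = insert x F" by auto
    moreover have "inj_on L1 (insert x F)"
      using eL(2) Lx unfolding L1_def inj_on_def by (metis insert_iff)
    moreover have "\<forall>v\<in>insert x F. 1 \<le> L1 v \<and> L1 v \<le> Suc n" using eL(3) unfolding L1_def by auto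
    ultimately show "\<exists>e L. kgen (card (insert x F)) e (insert x F) L E \<and> inj_on L (insert x F) \<and> (\<forall>v\<in>insert x F. 1 \<le> L v \<and> L v \<le> card (insert x F))"
      using G eq cI by metis
  qed
qed


lemma kex_graph:
  assumes "finite_graph G" "fst G \<noteq> {}"
  shows "\<exists>k e L. kgen k e (fst G) L (snd G)"
  using kexist[of "fst G"] assms unfolding finite_graph_def by blast

lemma cw_gen:
  assumes "finite_graph G" "fst G \<noteq> {}"
  shows "\<exists>e L. kgen (cw G) e (fst G) L (snd G)"
proof -
  obtain k where "fst G = {} \<or> (\<exists>e L. kgen k e (fst G) L (snd G))" using kex_graph[OF assms] by blast
  from LeastI[of "\<lambda>k. fst G = {} \<or> (\<exists>e L. kgen k e (fst G) L (snd G))", OF this]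
  show ?thesis using assms(2) unfolding cw_def by blast
qed

lemma mcw_le_cw:
  assumes "finite_graph G"
  shows "mcw G \<le> cw G"
proof (cases "fst G = {}")
  case True
  then show ?thesis unfolding mcw_def by simp
next
  case False
  then obtain e L where "kgen (cw G) e (fst G) L (snd G)" using cw_gen[OF assms] by blast
  from k2m[OF this] have "fst G = {} \<or> (\<exists>e L. mgen (cw G) e (fst G) L (snd G))" by blast
  then show ?thesis unfolding mcw_def by (rule Least_le)
qed

lemma cw_le_mcw:
  assumes "finite_graph G"
  shows "cw G \<le> 2 * 2 ^ mcw G"
proof (cases "fst G = {}")
  case True
  then show ?thesis unfolding cw_def by simp
next
  case False
  then obtain e L where "kgen (cw G) e (fst G) L (snd G)" using cw_gen[OF assms] by blast
  from k2m[OF this] have "fst G = {} \<or> (\<exists>e L. mgen (cw G) e (fst G) L (snd G))" by blast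
  from LeastI[of "\<lambda>k. fst G = {} \<or> (\<exists>e L. mgen k e (fst G) L (snd G))", OF this]
  obtain me mL where me: "mgen (mcw G) me (fst G) mL (snd G)" using False unfolding mcw_def by blast
  have "card (Pow {1..mcw G}) = card {1..(2::nat)^mcw G}" by (simp add: card_Pow)
  then obtain enc where "bij_betw enc (Pow {1..mcw G}) {1..(2::nat)^mcw G}"
    using finite_same_card_bij by blast
  from m2k[OF me this] have "fst G = {} \<or> (\<exists>e L. kgen (2 * 2 ^ mcw G) e (fst G) L (snd G))" by blast
  then show ?thesis unfolding cw_def by (rule Least_le)
qed

theorem mainTheorem3:
  fixes C :: "'a graph set"
  assumes "\<forall>G\<in>C. finite_graph G"
  shows "(\<exists>c::nat. \<forall>G\<in>C. cw G \<le> c) \<longleftrightarrow> (\<exists>c::nat. \<forall>G\<in>C. mcw G \<le> c)"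
proof
  assume "\<exists>c::nat. \<forall>G\<in>C. cw G \<le> c"
  then obtain c where "\<forall>G\<in>C. cw G \<le> c" by blast
  then have "\<forall>G\<in>C. mcw G \<le> c" using mcw_le_cw assms le_trans by blast
  then show "\<exists>c::nat. \<forall>G\<in>C. mcw G \<le> c" by blast
next
  assume "\<exists>c::nat. \<forall>G\<in>C. mcw G \<le> c"
  then obtain c where c: "\<forall>G\<in>C. mcw G \<le> c" by blast
  have "\<forall>G\<in>C. cw G \<le> 2 * 2 ^ c"
  proof
    fix G assume G: "G \<in> C"
    have "cw G \<le> 2 * 2 ^ mcw G" using cw_le_mcw assms G by blast
    also have "\<dots> \<le> 2 * 2 ^ c" using c G by simp
    finally show "cw G \<le> 2 * 2 ^ c" .
  qed
  then show "\<exists>c::nat. \<forall>G\<in>C. cw G \<le> c" by blast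
qed

end
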